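(* If $\mathcal{G}_1=([n],\mathcal{E}_1)$ and $\mathcal{G}_2=([n],\mathcal{E}_2)$ are simple plurigraphs with $Y_{\mathcal{G}_1}=Y_{\mathcal{G}_2}$, then $\mathcal{E}_1=\mathcal{E}_2$; that is, a simple plurigraph $\mathcal{G}$ can be reconstructed from $Y_{\mathcal{G}}$.
   Context: A graph $(V,E)$ has $E$ a multiset of unordered pairs of (not necessarily distinct) vertices. A plurigraph $\mathcal{G}=(V,\mathcal{E})$ has $\mathcal{E}$ a finite multiset of graphs $(V,E)$ on the vertex set $V$ with $E\neq\emptyset$. A proper coloring is $f:V\to\mathbb{P}=\{1,2,\dots\}$ such that every $(V,E)\in\mathcal{E}$ contains an edge $uv$ with $f(u)\ne f(v)$; for $V=[n]$, $Y_{\mathcal{G}}=\sum_f y_{f(1)}\cdots y_{f(n)}$ over proper colorings, in noncommuting variables $y_1,y_2,\dots$. For graphs $G_1,G_2$ on $V$, $G_1\prec G_2$ means every connected component of $G_1$ is contained in some connected component of $G_2$. $\mathcal{G}$ is a simple plurigraph if (i) for each $G\in\mathcal{E}$, every connected component of $G$ is a (simple, loopless) complete graph, and (ii) there do not exist two distinct members $G_1\ne G_2$ of $\mathcal{E}$ with $G_1\prec G_2$ (so in particular no pluriedge occurs twice). *)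

theory Defs
  imports Main "HOL-Library.Multiset" "HOL-Library.Uprod" "HOL-Library.FuncSet"
begin

text \<open>A graph on the vertex set [n] = {1..n}: a multiset of unordered pairs
(loops Upair v v allowed). A plurigraph on [n]: a finite multiset of such graphs.\<close>

type_synonym graph = "nat uprod multiset"
type_synonym plurigraph = "graph multiset"

definition is_graph :: "nat \<Rightarrow> graph \<Rightarrow> bool" where
  "is_graph n G \<longleftrightarrow> (\<forall>e\<in>#G. set_uprod e \<subseteq> {1..n})"

definition is_plurigraph :: "nat \<Rightarrow> plurigraph \<Rightarrow> bool" where
  "is_plurigraph n \<E> \<longleftrightarrow> (\<forall>G\<in>#\<E>. is_graph n G \<and> G \<noteq> {#})"

definition adj :: "graph \<Rightarrow> nat \<Rightarrow> nat \<Rightarrow> bool" where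
  "adj G u v \<longleftrightarrow> Upair u v \<in># G"

definition components :: "nat \<Rightarrow> graph \<Rightarrow> nat set set" where
  "components n G = {{u \<in> {1..n}. (adj G)\<^sup>*\<^sup>* v u} | v. v \<in> {1..n}}"

definition prec :: "nat \<Rightarrow> graph \<Rightarrow> graph \<Rightarrow> bool" where
  "prec n G1 G2 \<longleftrightarrow> (\<forall>C\<in>components n G1. \<exists>D\<in>components n G2. C \<subseteq> D)"

definition complete_components :: "nat \<Rightarrow> graph \<Rightarrow> bool" where
  "complete_components n G \<longleftrightarrow>
     (\<forall>e. count G e \<le> 1) \<and> (\<forall>u. Upair u u \<notin># G) \<and>
     (\<forall>C\<in>components n G. \<forall>u\<in>C. \<forall>v\<in>C. u \<noteq> v \<longrightarrow> Upair u v \<in># G)"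

definition simple_plurigraph :: "nat \<Rightarrow> plurigraph \<Rightarrow> bool" where
  "simple_plurigraph n \<E> \<longleftrightarrow> is_plurigraph n \<E> \<and>
     (\<forall>G\<in>#\<E>. complete_components n G) \<and>
     (\<forall>G. count \<E> G \<le> 1) \<and>
     (\<forall>G1\<in>#\<E>. \<forall>G2\<in>#\<E>. G1 \<noteq> G2 \<longrightarrow> \<not> prec n G1 G2)"

definition proper_coloring :: "nat \<Rightarrow> plurigraph \<Rightarrow> (nat \<Rightarrow> nat) \<Rightarrow> bool" where
  "proper_coloring n \<E> f \<longleftrightarrow> f \<in> {1..n} \<rightarrow>\<^sub>E {1..} \<and>
     (\<forall>G\<in>#\<E>. \<exists>u v. Upair u v \<in># G \<and> f u \<noteq> f v)"

text \<open>Y_G as a noncommutative formal power series in y_1, y_2, ...: represented by its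
coefficient function on words (monomials y_{w_1}...y_{w_k} encoded as lists w).\<close>
definition Y :: "nat \<Rightarrow> plurigraph \<Rightarrow> nat list \<Rightarrow> nat" where
  "Y n \<E> w = card {f. proper_coloring n \<E> f \<and> map f [1..<n+1] = w}"

end

theory Submission
  imports Defs
begin

abbreviation conn :: "graph \<Rightarrow> nat \<Rightarrow> nat \<Rightarrow> bool" where
  "conn G \<equiv> (adj G)\<^sup>*\<^sup>*"

definition R :: "graph \<Rightarrow> graph \<Rightarrow> bool" where
  "R G' G \<longleftrightarrow> (\<forall>u v. Upair u v \<in># G' \<longrightarrow> conn G u v)"

lemma adj_sym: "adj G u v \<Longrightarrow> adj G v u"
  unfolding adj_def by (metis Upair_inject)

lemma conn_sym: "conn G u v \<Longrightarrow> conn G v u"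
proof (induction rule: rtranclp_induct)
  case base then show ?case by simp
next
  case (step y z)
  then show ?case using adj_sym
    by (metis converse_rtranclp_into_rtranclp)
qed

lemma R_conn: assumes "R G' G" "conn G' u v" shows "conn G u v"
  using assms(2)
proof (induction rule: rtranclp_induct)
  case base then show ?case by simp
next
  case (step y z)
  then have "conn G y z" using assms(1) unfolding R_def adj_def by blast
  then show ?case using step by (meson rtranclp_trans)
qed

lemma R_trans: assumes "R A B" "R B C" shows "R A C"
  unfolding R_def
proof clarify
  fix u v assume "Upair u v \<in># A"
  then have "conn B u v" using assms(1) unfolding R_def by blast
  then show "conn C u v" using R_conn[OF assms(2)] by blast
qed

lemma R_prec: assumes "R G' G" shows "prec n G' G"
  unfolding prec_def components_def
proof clarify
  fix v assume v: "v \<in> {1..n}"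
  show "\<exists>D\<in>{{u \<in> {1..n}. conn G v u} |v. v \<in> {1..n}}. {u \<in> {1..n}. conn G' v u} \<subseteq> D"
  proof
    show "{u \<in> {1..n}. conn G v u} \<in> {{u \<in> {1..n}. conn G v u} |v. v \<in> {1..n}}"
      using v by blast
    show "{u \<in> {1..n}. conn G' v u} \<subseteq> {u \<in> {1..n}. conn G v u}"
      using R_conn[OF assms] by blast
  qed
qed

lemma conn_range: assumes "is_graph n G" "conn G v w" shows "w = v \<or> w \<in> {1..n}"
  using assms(2)
proof (induction rule: rtranclp_induct)
  case base then show ?case by simp
next
  case (step y z)
  then have "Upair y z \<in># G" by (simp add: adj_def)
  then have "set_uprod (Upair y z) \<subseteq> {1..n}" using assms(1) unfolding is_graph_def by blast
  then show ?case by simp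
qed

lemma cc_count: "complete_components n G \<Longrightarrow> count G e \<le> 1"
  unfolding complete_components_def by blast

lemma cc_loop: "complete_components n G \<Longrightarrow> Upair u u \<notin># G"
  unfolding complete_components_def by blast

lemma cc_comp: "complete_components n G \<Longrightarrow> C \<in> components n G \<Longrightarrow> u \<in> C \<Longrightarrow> v \<in> C
   \<Longrightarrow> u \<noteq> v \<Longrightarrow> Upair u v \<in># G"
  unfolding complete_components_def by blast

lemma ig_mem: "is_graph n G \<Longrightarrow> Upair u v \<in># G \<Longrightarrow> u \<in> {1..n} \<and> v \<in> {1..n}"
  unfolding is_graph_def by (metis insert_subset set_uprod_simps)

lemma R_antisym:
  assumes "R G G'" "R G' G" "is_graph n G" "is_graph n G'"
    "complete_components n G" "complete_components n G'"
  shows "G = G'"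
proof -
  have sub: "Upair u v \<in># B" if "Upair u v \<in># A" "R A B" "is_graph n A"
      "complete_components n A" "complete_components n B" for A B :: graph and u v :: nat
  proof -
    have uv: "u \<in> {1..n}" "v \<in> {1..n}" using ig_mem[OF that(3,1)] by auto
    have ne: "u \<noteq> v" using that(1) cc_loop[OF that(4)] by metis
    have c: "conn B u v" using that(1,2) unfolding R_def by blast
    have C: "{w \<in> {1..n}. conn B u w} \<in> components n B"
      unfolding components_def using uv(1) by (intro CollectI exI conjI) (rule refl)
    have "u \<in> {w \<in> {1..n}. conn B u w}" "v \<in> {w \<in> {1..n}. conn B u w}" using uv c by auto
    then show ?thesis using cc_comp[OF that(5) C _ _ ne] by blast
  qed
  show ?thesis
  proof (rule multiset_eqI)
    fix e :: "nat uprod"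
    obtain u v where e: "e = Upair u v" by (cases e) auto
    have "Upair u v \<in># G \<longleftrightarrow> Upair u v \<in># G'"
      using sub[OF _ assms(1) assms(3) assms(5) assms(6)] sub[OF _ assms(2) assms(4) assms(6) assms(5)]
      by blast
    then have iff: "count G e > 0 \<longleftrightarrow> count G' e > 0" using e by simp
    moreover have "count G e \<le> 1" "count G' e \<le> 1"
      using cc_count[OF assms(5)] cc_count[OF assms(6)] by auto
    ultimately show "count G e = count G' e" by linarith
  qed
qed

lemma map_eq_PiE:
  assumes "f \<in> {1..n} \<rightarrow>\<^sub>E A" "g \<in> {1..n} \<rightarrow>\<^sub>E B" "map f [1..<n+1] = map g [1..<n+1]"
  shows "f = g"
proof
  fix x
  show "f x = g x"
  proof (cases "x \<in> {1..n}")
    case True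
    then have "x \<in> set [1..<n+1]" by auto
    then show ?thesis using assms(3) by (metis map_eq_conv)
  next
    case False
    then show ?thesis using assms(1,2) by (simp add: PiE_def extensional_def)
  qed
qed

lemma proper_imp:
  assumes "Y n E1 = Y n E2" "proper_coloring n E1 f"
  shows "proper_coloring n E2 f"
proof -
  have fP: "f \<in> {1..n} \<rightarrow>\<^sub>E {1..}" using assms(2) unfolding proper_coloring_def by blast
  have "{g. proper_coloring n E1 g \<and> map g [1..<n+1] = map f [1..<n+1]} = {f}"
  proof safe
    fix g assume "proper_coloring n E1 g" "map g [1..<n+1] = map f [1..<n+1]"
    then show "g = f" using map_eq_PiE fP unfolding proper_coloring_def by blast
  qed (use assms(2) in auto)
  then have "Y n E1 (map f [1..<n+1]) = 1" unfolding Y_def by simp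
  then have "card {g. proper_coloring n E2 g \<and> map g [1..<n+1] = map f [1..<n+1]} = 1"
    using assms(1) unfolding Y_def by metis
  then obtain x where "{g. proper_coloring n E2 g \<and> map g [1..<n+1] = map f [1..<n+1]} = {x}"
    by (rule card_1_singletonE)
  then have "x \<in> {g. proper_coloring n E2 g \<and> map g [1..<n+1] = map f [1..<n+1]}" by simp
  then have g: "proper_coloring n E2 x" "map x [1..<n+1] = map f [1..<n+1]" by auto
  then have "x = f" using map_eq_PiE fP unfolding proper_coloring_def by blast
  then show ?thesis using g by simp
qed

definition fcol :: "nat \<Rightarrow> graph \<Rightarrow> nat \<Rightarrow> nat" where
  "fcol n G v = (if v \<in> {1..n} then (LEAST w. conn G v w) else undefined)"

lemma fcol_conn: assumes "v \<in> {1..n}" shows "conn G v (fcol n G v)"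
proof -
  have "conn G v v" by (rule rtranclp.rtrancl_refl)
  then have "conn G v (LEAST w. conn G v w)" by (rule LeastI)
  then show ?thesis using assms unfolding fcol_def by presburger
qed

lemma fcol_PiE: assumes "is_graph n G" shows "fcol n G \<in> {1..n} \<rightarrow>\<^sub>E {1..}"
proof -
  have "fcol n G v \<ge> 1" if "v \<in> {1..n}" for v
    using conn_range[OF assms fcol_conn[OF that, of G]] that by auto
  moreover have "fcol n G v = undefined" if "v \<notin> {1..n}" for v
    using that unfolding fcol_def by presburger
  ultimately show ?thesis by (intro PiE_I) auto
qed

lemma fcol_eq: assumes "u \<in> {1..n}" "v \<in> {1..n}" "conn G u v"
  shows "fcol n G u = fcol n G v"
proof -
  have "conn G u w \<longleftrightarrow> conn G v w" for w
    using assms(3) conn_sym by (meson rtranclp_trans)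
  then have "(\<lambda>w. conn G u w) = (\<lambda>w. conn G v w)" by blast
  then have "(LEAST w. conn G u w) = (LEAST w. conn G v w)" by (rule arg_cong)
  then show ?thesis using assms(1,2) unfolding fcol_def by presburger
qed

lemma fcol_conn2: assumes "u \<in> {1..n}" "v \<in> {1..n}" "fcol n G u = fcol n G v"
  shows "conn G u v"
proof -
  have a: "conn G u (fcol n G u)" using fcol_conn[OF assms(1)] .
  have "conn G v (fcol n G u)" using fcol_conn[OF assms(2), of G] assms(3) by simp
  then have "conn G (fcol n G u) v" by (rule conn_sym)
  then show ?thesis using a by (meson rtranclp_trans)
qed

lemma key:
  assumes s1: "simple_plurigraph n E1" and s2: "simple_plurigraph n E2"
    and pr: "\<And>f. proper_coloring n E1 f \<longleftrightarrow> proper_coloring n E2 f"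
    and G: "G \<in># E1"
  shows "\<exists>G'\<in>#E2. R G' G"
proof -
  have gG: "is_graph n G" using s1 G unfolding simple_plurigraph_def is_plurigraph_def by blast
  let ?f = "fcol n G"
  have "\<not> proper_coloring n E1 ?f"
  proof
    assume "proper_coloring n E1 ?f"
    then obtain u v where "Upair u v \<in># G" "?f u \<noteq> ?f v"
      using G unfolding proper_coloring_def by blast
    moreover then have "u \<in> {1..n}" "v \<in> {1..n}" "conn G u v"
      using gG unfolding is_graph_def adj_def by auto
    ultimately show False using fcol_eq by blast
  qed
  then have "\<not> proper_coloring n E2 ?f"
    using pr by blast
  then obtain G' where G': "G' \<in># E2" "\<forall>u v. Upair u v \<in># G' \<longrightarrow> ?f u = ?f v"
    using fcol_PiE[OF gG] unfolding proper_coloring_def by blast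
  have gG': "is_graph n G'" using s2 G'(1) unfolding simple_plurigraph_def is_plurigraph_def by blast
  have "R G' G" unfolding R_def
  proof clarify
    fix u v assume e: "Upair u v \<in># G'"
    then have "u \<in> {1..n}" "v \<in> {1..n}" using gG' unfolding is_graph_def by auto
    then show "conn G u v" using fcol_conn2 G'(2) e by blast
  qed
  then show ?thesis using G'(1) by blast
qed

lemma subset_part:
  assumes s1: "simple_plurigraph n E1" and s2: "simple_plurigraph n E2"
    and pr: "\<And>f. proper_coloring n E1 f \<longleftrightarrow> proper_coloring n E2 f"
    and G: "G \<in># E1"
  shows "G \<in># E2"
proof -
  have pr': "\<And>f. proper_coloring n E2 f \<longleftrightarrow> proper_coloring n E1 f" using pr by blast
  obtain G' where G': "G' \<in># E2" "R G' G" using key[OF s1 s2 pr G] by blast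
  obtain G'' where G'': "G'' \<in># E1" "R G'' G'" using key[OF s2 s1 pr' G'(1)] by blast
  have "R G'' G" using R_trans G'(2) G''(2) by blast
  have ac: "\<forall>G1\<in>#E1. \<forall>G2\<in>#E1. G1 \<noteq> G2 \<longrightarrow> \<not> prec n G1 G2"
    using s1 unfolding simple_plurigraph_def by blast
  have "prec n G'' G" using R_prec \<open>R G'' G\<close> by blast
  then have "G'' = G" using ac G G''(1) by blast
  have i1: "is_graph n G" "complete_components n G"
    using s1 G unfolding simple_plurigraph_def is_plurigraph_def by auto
  have i2: "is_graph n G'" "complete_components n G'"
    using s2 G'(1) unfolding simple_plurigraph_def is_plurigraph_def by auto
  have "R G G'" using G''(2) \<open>G'' = G\<close> by simp
  then have "G = G'" using R_antisym[OF _ G'(2) i1(1) i2(1) i1(2) i2(2)] by blast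
  then show ?thesis using G'(1) by simp
qed

theorem proposition4p1:
  fixes n :: nat and \<E>1 \<E>2 :: plurigraph
  assumes "simple_plurigraph n \<E>1" and "simple_plurigraph n \<E>2"
    and "Y n \<E>1 = Y n \<E>2"
  shows "\<E>1 = \<E>2"
proof -
  have pr: "\<And>f. proper_coloring n \<E>1 f \<longleftrightarrow> proper_coloring n \<E>2 f"
    using proper_imp[OF assms(3)] proper_imp[OF assms(3)[symmetric]] by blast
  have pr': "\<And>f. proper_coloring n \<E>2 f \<longleftrightarrow> proper_coloring n \<E>1 f" using pr by blast
  have eq: "G \<in># \<E>1 \<longleftrightarrow> G \<in># \<E>2" for G
    using subset_part[OF assms(1,2) pr] subset_part[OF assms(2,1) pr'] by blast
  show ?thesis
  proof (rule multiset_eqI)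
    fix G :: graph
    have "count \<E>1 G \<le> 1" "count \<E>2 G \<le> 1" using assms(1,2) unfolding simple_plurigraph_def by blast+
    moreover have "count \<E>1 G > 0 \<longleftrightarrow> count \<E>2 G > 0" using eq[of G] by simp
    ultimately show "count \<E>1 G = count \<E>2 G" by linarith
  qed
qed

end
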